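(* Let $(M,g)$ be a semi-Riemannian manifold of dimension $n\ge3$ which is Ricci generalized recurrent with 1-forms $(\overline\Pi,\overline\Phi)$, i.e. $\nabla S=\overline\Pi\otimes S+\overline\Phi\otimes g$, and super generalized recurrent with 1-forms $(\Pi,\Phi,\Psi,\Theta)$, i.e. $\nabla R = \Pi \otimes R + \Phi \otimes S\wedge S + \Psi \otimes g\wedge S + \Theta \otimes g\wedge g$. Then: (i) $M$ is $C$-$SGK_n$ with 1-forms $\left(\Pi,\ \Phi,\ \Psi-\frac{\overline\Pi-\Pi}{n-2},\ \Theta-\frac{\overline\Phi}{n-2}+\frac{\kappa\overline\Pi+n\overline\Phi-\kappa\Pi}{2(n-1)(n-2)}\right)$; (ii) $M$ is $W$-$SGK_n$ with 1-forms $\left(\Pi,\ \Phi,\ \Psi,\ \Theta-\frac{\kappa\overline\Pi+n\overline\Phi-\kappa\Pi}{2n(n-1)}\right)$; (iii) $M$ is $K$-$SGK_n$ with 1-forms $\left(\Pi,\ \Phi,\ \Psi-\frac{\overline\Pi-\Pi}{n-2},\ \Theta-\frac{\overline\Phi}{n-2}\right)$; (iv) if $\Pi=\overline\Pi$, then $M$ is $P$-$SGK_n$ with 1-forms $\left(\Pi,\ \Phi,\ \Psi,\ \Theta-\frac{\overline\Phi}{2(n-1)}\right)$.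
   Context: $(M,g)$ is connected with Levi-Civita connection $\nabla$, curvature $(0,4)$-tensor $R$, Ricci tensor $S$ and scalar curvature $\kappa$. For symmetric $(0,2)$-tensors $A,E$, $(A\wedge E)(X_1,X_2,Y_1,Y_2)=A(X_1,Y_2)E(X_2,Y_1)+A(X_2,Y_1)E(X_1,Y_2)-A(X_1,Y_1)E(X_2,Y_2)-A(X_2,Y_2)E(X_1,Y_1)$. $(\Pi\otimes T)(X,X_1,\dots)=\Pi(X)T(X_1,\dots)$, $(\nabla T)(X,X_1,\dots)=(\nabla_XT)(X_1,\dots)$. The conformal, concircular, conharmonic and projective curvature tensors are $C=R-\frac1{n-2}g\wedge S+\frac{\kappa}{2(n-1)(n-2)}g\wedge g$, $W=R-\frac{\kappa}{2n(n-1)}g\wedge g$, $K=R-\frac1{n-2}g\wedge S$, and $P(X_1,X_2,X_3,X_4)=R(X_1,X_2,X_3,X_4)-\frac1{n-1}\left[S(X_2,X_3)g(X_1,X_4)-S(X_1,X_3)g(X_2,X_4)\right]$. For a $(0,4)$-tensor $T$, $M$ is $T$-$SGK_n$ with 1-forms $(\Pi,\Phi,\Psi,\Theta)$ if $\nabla T=\Pi\otimes T+\Phi\otimes S\wedge S+\Psi\otimes g\wedge S+\Theta\otimes g\wedge g$ (on the set where $\nabla T-\xi\otimes T-\zeta\otimes S\wedge S-\theta\otimes g\wedge S\neq0$ for all 1-forms $\xi,\zeta,\theta$); $SGK_n$ means $R$-$SGK_n$. *)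

theory Defs
  imports "HOL-Analysis.Analysis"
begin

text \<open>Local-coordinate model of a semi-Riemannian manifold: an open connected
  coordinate domain U in R^n (index type 'n, n = CARD('n)) with metric components
  g x i j.\<close>

type_synonym 'n pt = "real^'n"
type_synonym 'n form1 = "'n pt \<Rightarrow> 'n \<Rightarrow> real"
type_synonym 'n tens2 = "'n pt \<Rightarrow> 'n \<Rightarrow> 'n \<Rightarrow> real"
type_synonym 'n tens4 = "'n pt \<Rightarrow> 'n \<Rightarrow> 'n \<Rightarrow> 'n \<Rightarrow> 'n \<Rightarrow> real"

definition pd :: "'n::finite \<Rightarrow> ('n pt \<Rightarrow> real) \<Rightarrow> 'n pt \<Rightarrow> real" where
  "pd i f x = frechet_derivative f (at x) (axis i 1)"

fun iter_pd :: "'n::finite list \<Rightarrow> ('n pt \<Rightarrow> real) \<Rightarrow> 'n pt \<Rightarrow> real" where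
  "iter_pd [] f = f"
| "iter_pd (i # is) f = pd i (iter_pd is f)"

definition smooth_on :: "'n::finite pt set \<Rightarrow> ('n pt \<Rightarrow> real) \<Rightarrow> bool" where
  "smooth_on U f \<longleftrightarrow> (\<forall>is. \<forall>x\<in>U. iter_pd is f differentiable (at x))"

definition gmat :: "'n::finite tens2 \<Rightarrow> 'n pt \<Rightarrow> real^'n^'n" where
  "gmat g x = (\<chi> i j. g x i j)"

definition ginv :: "'n::finite tens2 \<Rightarrow> 'n tens2" where
  "ginv g x i j = matrix_inv (gmat g x) $ i $ j"

definition semi_riemannian :: "'n::finite pt set \<Rightarrow> 'n tens2 \<Rightarrow> bool" where
  "semi_riemannian U g \<longleftrightarrow> open U \<and> connected U \<and> U \<noteq> {} \<and>
     (\<forall>i j. smooth_on U (\<lambda>x. g x i j)) \<and>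
     (\<forall>x\<in>U. \<forall>i j. g x i j = g x j i) \<and>
     (\<forall>x\<in>U. det (gmat g x) \<noteq> 0)"

definition christoffel :: "'n::finite tens2 \<Rightarrow> 'n pt \<Rightarrow> 'n \<Rightarrow> 'n \<Rightarrow> 'n \<Rightarrow> real" where
  "christoffel g x k i j = (1/2) * (\<Sum>l\<in>UNIV. ginv g x k l *
      (pd i (\<lambda>y. g y j l) x + pd j (\<lambda>y. g y i l) x - pd l (\<lambda>y. g y i j) x))"

text \<open>R(d_i,d_j)d_k = Rup l i j k d_l with R(X,Y) = [nabla_X,nabla_Y] - nabla_[X,Y].\<close>
definition Rup :: "'n::finite tens2 \<Rightarrow> 'n pt \<Rightarrow> 'n \<Rightarrow> 'n \<Rightarrow> 'n \<Rightarrow> 'n \<Rightarrow> real" where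
  "Rup g x l i j k = pd i (\<lambda>y. christoffel g y l j k) x - pd j (\<lambda>y. christoffel g y l i k) x
     + (\<Sum>m\<in>UNIV. christoffel g x l i m * christoffel g x m j k
                  - christoffel g x l j m * christoffel g x m i k)"

text \<open>Curvature (0,4)-tensor R(X1,X2,X3,X4) = g(R(X1,X2)X3, X4).\<close>
definition Riem :: "'n::finite tens2 \<Rightarrow> 'n tens4" where
  "Riem g x i j k h = (\<Sum>l\<in>UNIV. g x l h * Rup g x l i j k)"

definition Ric :: "'n::finite tens2 \<Rightarrow> 'n tens2" where
  "Ric g x j k = (\<Sum>i\<in>UNIV. Rup g x i i j k)"

definition scal :: "'n::finite tens2 \<Rightarrow> 'n pt \<Rightarrow> real" where
  "scal g x = (\<Sum>j\<in>UNIV. \<Sum>k\<in>UNIV. ginv g x j k * Ric g x j k)"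

definition kn :: "'n::finite tens2 \<Rightarrow> 'n tens2 \<Rightarrow> 'n tens4" where
  "kn A E x a b c d = A x a d * E x b c + A x b c * E x a d - A x a c * E x b d - A x b d * E x a c"

text \<open>Covariant derivatives (nabla T)(X, X1, ...) = (nabla_X T)(X1, ...).\<close>
definition cov2 :: "'n::finite tens2 \<Rightarrow> 'n tens2 \<Rightarrow> 'n pt \<Rightarrow> 'n \<Rightarrow> 'n \<Rightarrow> 'n \<Rightarrow> real" where
  "cov2 g A x i a b = pd i (\<lambda>y. A y a b) x
     - (\<Sum>m\<in>UNIV. christoffel g x m i a * A x m b + christoffel g x m i b * A x a m)"

definition cov4 :: "'n::finite tens2 \<Rightarrow> 'n tens4 \<Rightarrow> 'n pt \<Rightarrow> 'n \<Rightarrow> 'n \<Rightarrow> 'n \<Rightarrow> 'n \<Rightarrow> 'n \<Rightarrow> real" where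
  "cov4 g T x i a b c d = pd i (\<lambda>y. T y a b c d) x
     - (\<Sum>m\<in>UNIV. christoffel g x m i a * T x m b c d + christoffel g x m i b * T x a m c d
                + christoffel g x m i c * T x a b m d + christoffel g x m i d * T x a b c m)"

definition dimr :: "'n::finite itself \<Rightarrow> real" where
  "dimr _ = real CARD('n)"

definition conformal :: "'n::finite tens2 \<Rightarrow> 'n tens4" where
  "conformal g x a b c d = Riem g x a b c d - 1 / (dimr TYPE('n) - 2) * kn g (Ric g) x a b c d
     + scal g x / (2 * (dimr TYPE('n) - 1) * (dimr TYPE('n) - 2)) * kn g g x a b c d"

definition concircular :: "'n::finite tens2 \<Rightarrow> 'n tens4" where
  "concircular g x a b c d = Riem g x a b c d
     - scal g x / (2 * dimr TYPE('n) * (dimr TYPE('n) - 1)) * kn g g x a b c d"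

definition conharmonic :: "'n::finite tens2 \<Rightarrow> 'n tens4" where
  "conharmonic g x a b c d = Riem g x a b c d - 1 / (dimr TYPE('n) - 2) * kn g (Ric g) x a b c d"

definition projective :: "'n::finite tens2 \<Rightarrow> 'n tens4" where
  "projective g x a b c d = Riem g x a b c d
     - 1 / (dimr TYPE('n) - 1) * (Ric g x b c * g x a d - Ric g x a c * g x b d)"

definition ricci_gen_recurrent :: "'n::finite pt set \<Rightarrow> 'n tens2 \<Rightarrow> 'n form1 \<Rightarrow> 'n form1 \<Rightarrow> bool" where
  "ricci_gen_recurrent U g Pb Fb \<longleftrightarrow> (\<forall>x\<in>U. \<forall>i a b.
     cov2 g (Ric g) x i a b = Pb x i * Ric g x a b + Fb x i * g x a b)"

definition SGK :: "'n::finite pt set \<Rightarrow> 'n tens2 \<Rightarrow> 'n tens4 \<Rightarrow> 'n form1 \<Rightarrow> 'n form1 \<Rightarrow> 'n form1 \<Rightarrow> 'n form1 \<Rightarrow> bool" where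
  "SGK U g T Pi1 Phi1 Psi1 Theta1 \<longleftrightarrow> (\<forall>x\<in>U. \<forall>i a b c d.
     cov4 g T x i a b c d = Pi1 x i * T x a b c d + Phi1 x i * kn (Ric g) (Ric g) x a b c d
       + Psi1 x i * kn g (Ric g) x a b c d + Theta1 x i * kn g g x a b c d)"

end

theory Submission
  imports Defs "HOL-Analysis.Analysis"
begin

lemma pd_local:
  assumes "open U" "x \<in> U" "\<And>y. y \<in> U \<Longrightarrow> f y = h y"
  shows "pd i f x = pd i h x"
proof -
  have "(f has_derivative D) (at x) \<longleftrightarrow> (h has_derivative D) (at x)" for D
  proof
    assume "(f has_derivative D) (at x)"
    then show "(h has_derivative D) (at x)"
      by (rule has_derivative_transform_within_open[OF _ assms(1,2)]) (rule assms(3))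
  next
    assume "(h has_derivative D) (at x)"
    then show "(f has_derivative D) (at x)"
      by (rule has_derivative_transform_within_open[OF _ assms(1,2)]) (rule assms(3)[symmetric])
  qed
  then show ?thesis unfolding pd_def frechet_derivative_def by simp
qed

lemma diff_local:
  assumes "open U" "x \<in> U" "f differentiable (at x)" "\<And>y. y \<in> U \<Longrightarrow> f y = h y"
  shows "h differentiable (at x)"
proof -
  obtain D where "(f has_derivative D) (at x)" using assms(3) unfolding differentiable_def by blast
  then have "(h has_derivative D) (at x)"
    by (rule has_derivative_transform_within_open[OF _ assms(1,2)]) (rule assms(4))
  then show ?thesis unfolding differentiable_def by blast
qed

lemma iter_pd_local:
  assumes "open U" "\<forall>y\<in>U. f y = h y"
  shows "y \<in> U \<Longrightarrow> iter_pd is f y = iter_pd is h y"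
proof (induction "is" arbitrary: y)
  case Nil then show ?case using assms(2) by simp
next
  case (Cons i js)
  have "pd i (iter_pd js f) y = pd i (iter_pd js h) y"
  proof (rule pd_local[OF assms(1) Cons.prems])
    fix z assume "z \<in> U" then show "iter_pd js f z = iter_pd js h z" by (rule Cons.IH)
  qed
  then show ?case by simp
qed

lemma iter_pd_snoc: "iter_pd (is @ [i]) f = iter_pd is (pd i f)"
  by (induction "is") simp_all

lemma fd_works: "f differentiable (at x) \<Longrightarrow> (f has_derivative frechet_derivative f (at x)) (at x)"
  by (simp add: frechet_derivative_works)

lemma pd_add: "f differentiable (at x) \<Longrightarrow> h differentiable (at x) \<Longrightarrow>
   pd i (\<lambda>y. f y + h y) x = pd i f x + pd i h x"
proof -
  assume a: "f differentiable (at x)" "h differentiable (at x)"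
  have "((\<lambda>y. f y + h y) has_derivative (\<lambda>v. frechet_derivative f (at x) v + frechet_derivative h (at x) v)) (at x)" (is ?D)
    by (rule has_derivative_add[OF fd_works[OF a(1)] fd_works[OF a(2)]])
  have e: "frechet_derivative (\<lambda>y. f y + h y) (at x) = (\<lambda>v. frechet_derivative f (at x) v + frechet_derivative h (at x) v)"
    using frechet_derivative_at[OF \<open>?D\<close>] by simp
  show ?thesis unfolding pd_def e by simp
qed

lemma pd_mult: "f differentiable (at x) \<Longrightarrow> h differentiable (at x) \<Longrightarrow>
   pd i (\<lambda>y. f y * h y) x = pd i f x * h x + f x * pd i h x"
proof -
  assume a: "f differentiable (at x)" "h differentiable (at x)"
  have "((\<lambda>y. f y * h y) has_derivative (\<lambda>v. f x * frechet_derivative h (at x) v + frechet_derivative f (at x) v * h x)) (at x)" (is ?D)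
    by (rule has_derivative_mult[OF fd_works[OF a(1)] fd_works[OF a(2)]])
  have e: "frechet_derivative (\<lambda>y. f y * h y) (at x) = (\<lambda>v. f x * frechet_derivative h (at x) v + frechet_derivative f (at x) v * h x)"
    using frechet_derivative_at[OF \<open>?D\<close>] by simp
  show ?thesis unfolding pd_def e by simp
qed

lemma pd_const: "pd i (\<lambda>y. c) x = 0"
proof -
  have e: "frechet_derivative (\<lambda>y. c) (at x) = (\<lambda>v. 0)"
    using frechet_derivative_at[OF has_derivative_const[of c]] by simp
  show ?thesis unfolding pd_def e by simp
qed

lemma pd_inverse: "f differentiable (at x) \<Longrightarrow> f x \<noteq> 0 \<Longrightarrow>
   pd i (\<lambda>y. inverse (f y)) x = - (pd i f x) * (inverse (f x) * inverse (f x))"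
proof -
  assume a: "f differentiable (at x)" "f x \<noteq> 0"
  have "((\<lambda>y. inverse (f y)) has_derivative (\<lambda>v. - (inverse (f x) * frechet_derivative f (at x) v * inverse (f x)))) (at x)" (is ?D)
    by (rule Deriv.has_derivative_inverse[OF a(2) fd_works[OF a(1)]])
  have e: "frechet_derivative (\<lambda>y. inverse (f y)) (at x) = (\<lambda>v. - (inverse (f x) * frechet_derivative f (at x) v * inverse (f x)))"
    using frechet_derivative_at[OF \<open>?D\<close>] by simp
  show ?thesis unfolding pd_def e by (simp add: algebra_simps)
qed

definition sm_upto :: "nat \<Rightarrow> 'n::finite pt set \<Rightarrow> ('n pt \<Rightarrow> real) \<Rightarrow> bool" where
  "sm_upto N U f \<longleftrightarrow> (\<forall>is. length is \<le> N \<longrightarrow> (\<forall>x\<in>U. iter_pd is f differentiable (at x)))"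

lemma smooth_on_sm: fixes f :: "'n::finite pt \<Rightarrow> real" shows "smooth_on U f \<longleftrightarrow> (\<forall>N. sm_upto N U f)"
proof
  assume "smooth_on U f" then show "\<forall>N. sm_upto N U f" unfolding smooth_on_def sm_upto_def by blast
next
  assume a: "\<forall>N. sm_upto N U f"
  show "smooth_on U f" unfolding smooth_on_def
  proof (intro allI ballI)
    fix "is" :: "'n list" and x assume "x \<in> U"
    moreover have "sm_upto (length is) U f" using a by blast
    ultimately show "iter_pd is f differentiable (at x)" unfolding sm_upto_def by blast
  qed
qed

lemma sm_mono: "sm_upto N U f \<Longrightarrow> M \<le> N \<Longrightarrow> sm_upto M U f"
  unfolding sm_upto_def using le_trans by blast

lemma sm_diff: fixes f :: "'n::finite pt \<Rightarrow> real" shows "sm_upto N U f \<Longrightarrow> x \<in> U \<Longrightarrow> f differentiable (at x)"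
proof -
  assume "sm_upto N U f" "x \<in> U"
  moreover have "length ([]::'n list) \<le> N" by simp
  ultimately have "iter_pd [] f differentiable (at x)" unfolding sm_upto_def by blast
  then show ?thesis by simp
qed

lemma sm_pd: fixes f :: "'n::finite pt \<Rightarrow> real" shows "sm_upto (Suc N) U f \<Longrightarrow> sm_upto N U (pd i f)"
  unfolding sm_upto_def
proof (intro allI impI ballI)
  fix "is" :: "'n list" and x assume a: "\<forall>is. length is \<le> Suc N \<longrightarrow> (\<forall>x\<in>U. iter_pd is f differentiable at x)"
    and l: "length is \<le> N" and x: "x \<in> U"
  have "length (is @ [i]) \<le> Suc N" using l by simp
  then have "iter_pd (is @ [i]) f differentiable at x" using a x by blast
  then show "iter_pd is (pd i f) differentiable at x" by (simp add: iter_pd_snoc)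
qed

lemma sm_local:
  fixes f :: "'n::finite pt \<Rightarrow> real"
  assumes "open U" "sm_upto N U f" "\<And>y. y \<in> U \<Longrightarrow> f y = h y"
  shows "sm_upto N U h"
  unfolding sm_upto_def
proof (intro allI impI ballI)
  fix "is" :: "'n list" and x assume "length is \<le> N" "x \<in> U"
  then have "iter_pd is f differentiable (at x)" using assms(2) unfolding sm_upto_def by blast
  then show "iter_pd is h differentiable (at x)"
  proof (rule diff_local[OF assms(1) \<open>x \<in> U\<close>])
    fix y assume "y \<in> U"
    have "\<forall>y\<in>U. f y = h y" using assms(3) by blast
    from iter_pd_local[OF assms(1) this \<open>y \<in> U\<close>] show "iter_pd is f y = iter_pd is h y" .
  qed
qed

lemma sm_snoc:
  fixes f :: "'n::finite pt \<Rightarrow> real"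
  assumes "\<forall>x\<in>U. f differentiable (at x)" "\<And>i. sm_upto N U (pd i f)"
  shows "sm_upto (Suc N) U f"
  unfolding sm_upto_def
proof (intro allI impI ballI)
  fix "is" :: "'n list" and x assume l: "length is \<le> Suc N" and x: "x \<in> U"
  show "iter_pd is f differentiable (at x)"
  proof (cases "is" rule: rev_exhaust)
    case Nil then show ?thesis using assms x by simp
  next
    case (snoc js i)
    then have "length js \<le> N" using l by simp
    then have "iter_pd js (pd i f) differentiable (at x)" using assms(2)[of i] x unfolding sm_upto_def by blast
    then show ?thesis using snoc by (simp add: iter_pd_snoc)
  qed
qed

lemma sm_add_aux:
  fixes f :: "'n::finite pt \<Rightarrow> real"
  assumes "open U" "sm_upto N U f" "sm_upto N U h"
  shows "length is \<le> Suc N \<Longrightarrow> y \<in> U \<Longrightarrow> iter_pd is (\<lambda>y. f y + h y) y = iter_pd is f y + iter_pd is h y"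
proof (induction "is" arbitrary: y)
  case Nil then show ?case by simp
next
  case (Cons i js)
  have "iter_pd (i # js) (\<lambda>y. f y + h y) y = pd i (\<lambda>y. iter_pd js f y + iter_pd js h y) y"
  proof -
    have "\<And>z. z \<in> U \<Longrightarrow> iter_pd js (\<lambda>y. f y + h y) z = iter_pd js f z + iter_pd js h z"
      using Cons.IH Cons.prems(1) by simp
    then have "pd i (iter_pd js (\<lambda>y. f y + h y)) y = pd i (\<lambda>y. iter_pd js f y + iter_pd js h y) y"
      by (rule pd_local[OF assms(1) Cons.prems(2)])
    then show ?thesis by simp
  qed
  also have "\<dots> = pd i (iter_pd js f) y + pd i (iter_pd js h) y"
  proof (rule pd_add)
    have "length js \<le> N" using Cons.prems(1) by simp
    then show "iter_pd js f differentiable (at y)" "iter_pd js h differentiable (at y)"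
      using assms(2,3) Cons.prems(2) unfolding sm_upto_def by blast+
  qed
  finally show ?case by simp
qed

lemma sm_add:
  fixes f :: "'n::finite pt \<Rightarrow> real"
  assumes "open U" "sm_upto N U f" "sm_upto N U h"
  shows "sm_upto N U (\<lambda>y. f y + h y)"
  unfolding sm_upto_def
proof (intro allI impI ballI)
  fix "is" :: "'n list" and x assume l: "length is \<le> N" and x: "x \<in> U"
  have "iter_pd is f differentiable (at x)" "iter_pd is h differentiable (at x)"
    using assms(2,3) l x unfolding sm_upto_def by blast+
  then have "(\<lambda>y. iter_pd is f y + iter_pd is h y) differentiable (at x)" by (rule differentiable_add)
  then show "iter_pd is (\<lambda>y. f y + h y) differentiable (at x)"
  proof (rule diff_local[OF assms(1) x])
    fix y assume "y \<in> U"
    with l show "iter_pd is f y + iter_pd is h y = iter_pd is (\<lambda>y. f y + h y) y"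
      using sm_add_aux[OF assms, of "is" y] by simp
  qed
qed

lemma pd_const_fun: "pd i (\<lambda>y. c) = (\<lambda>y. 0)"
  by (rule ext, rule pd_const)

lemma iter_pd_const: "iter_pd is (\<lambda>y. c) = (\<lambda>y. if is = [] then c else 0)"
proof (induction "is")
  case Nil then show ?case by simp
next
  case (Cons i js)
  show ?case
  proof (cases "js = []")
    case True then show ?thesis by (simp add: pd_const_fun)
  next
    case False then have "iter_pd js (\<lambda>y. c) = (\<lambda>y. 0)" using Cons.IH by simp
    then show ?thesis by (simp add: pd_const_fun)
  qed
qed

lemma sm_const: "sm_upto N U (\<lambda>y. c)"
  unfolding sm_upto_def iter_pd_const by (intro allI impI ballI differentiable_const)

lemma diff_inverse:
  fixes f :: "'n::finite pt \<Rightarrow> real"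
  assumes "f differentiable (at x)" "f x \<noteq> 0"
  shows "(\<lambda>y. inverse (f y)) differentiable (at x)"
proof -
  obtain D where "(f has_derivative D) (at x)" using assms(1) unfolding differentiable_def by blast
  from Deriv.has_derivative_inverse[OF assms(2) this] show ?thesis unfolding differentiable_def by blast
qed

lemma sm_zero: "(\<forall>x\<in>U. f differentiable (at x)) \<Longrightarrow> sm_upto 0 U f"
  unfolding sm_upto_def by simp

lemma sm_mult:
  assumes "open U"
  shows "sm_upto N U f \<Longrightarrow> sm_upto N U h \<Longrightarrow> sm_upto N U (\<lambda>y. f y * h y)"
proof (induction N arbitrary: f h)
  case 0
  show ?case
  proof (rule sm_zero, intro ballI)
    fix x assume "x \<in> U"
    show "(\<lambda>y. f y * h y) differentiable (at x)"
      using sm_diff[OF 0(1) \<open>x \<in> U\<close>] sm_diff[OF 0(2) \<open>x \<in> U\<close>] by (rule differentiable_mult)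
  qed
next
  case (Suc N)
  show ?case
  proof (rule sm_snoc)
    show "\<forall>x\<in>U. (\<lambda>y. f y * h y) differentiable (at x)"
    proof
      fix x assume x: "x \<in> U"
      show "(\<lambda>y. f y * h y) differentiable (at x)"
        by (rule differentiable_mult[OF sm_diff[OF Suc.prems(1) x] sm_diff[OF Suc.prems(2) x]])
    qed
    fix i
    have f1: "sm_upto N U (pd i f)" by (rule sm_pd[OF Suc.prems(1)])
    have h1: "sm_upto N U (pd i h)" by (rule sm_pd[OF Suc.prems(2)])
    have f0: "sm_upto N U f" by (rule sm_mono[OF Suc.prems(1)]) simp
    have h0: "sm_upto N U h" by (rule sm_mono[OF Suc.prems(2)]) simp
    have "sm_upto N U (\<lambda>y. pd i f y * h y + f y * pd i h y)"
      by (rule sm_add[OF assms Suc.IH[OF f1 h0] Suc.IH[OF f0 h1]])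
    then show "sm_upto N U (pd i (\<lambda>y. f y * h y))"
    proof (rule sm_local[OF assms])
      fix y assume "y \<in> U"
      then show "pd i f y * h y + f y * pd i h y = pd i (\<lambda>y. f y * h y) y"
        using pd_mult[OF sm_diff[OF Suc.prems(1)] sm_diff[OF Suc.prems(2)]] by simp
    qed
  qed
qed

lemma sm_inverse:
  assumes "open U"
  shows "sm_upto N U f \<Longrightarrow> \<forall>y\<in>U. f y \<noteq> 0 \<Longrightarrow> sm_upto N U (\<lambda>y. inverse (f y))"
proof (induction N arbitrary: f)
  case 0
  have d: "\<forall>x\<in>U. (\<lambda>y. inverse (f y)) differentiable (at x)"
  proof
    fix x assume x: "x \<in> U"
    show "(\<lambda>y. inverse (f y)) differentiable (at x)"
      by (rule diff_inverse[OF sm_diff[OF 0(1) x] bspec[OF 0(2) x]])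
  qed
  then show ?case by (rule sm_zero)
next
  case (Suc N)
  have d: "\<forall>x\<in>U. (\<lambda>y. inverse (f y)) differentiable (at x)"
  proof
    fix x assume x: "x \<in> U"
    show "(\<lambda>y. inverse (f y)) differentiable (at x)"
      by (rule diff_inverse[OF sm_diff[OF Suc.prems(1) x] bspec[OF Suc.prems(2) x]])
  qed
  show ?case
  proof (rule sm_snoc[OF d])
    fix i
    have f1: "sm_upto N U (pd i f)" by (rule sm_pd[OF Suc.prems(1)])
    have f0: "sm_upto N U f" by (rule sm_mono[OF Suc.prems(1)]) simp
    have "sm_upto N U (\<lambda>y. (\<lambda>y. (\<lambda>_. -1) y * pd i f y) y * (\<lambda>y. inverse (f y) * inverse (f y)) y)"
      by (rule sm_mult[OF assms sm_mult[OF assms sm_const f1] sm_mult[OF assms Suc.IH[OF f0 Suc.prems(2)] Suc.IH[OF f0 Suc.prems(2)]]])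
    then show "sm_upto N U (pd i (\<lambda>y. inverse (f y)))"
    proof (rule sm_local[OF assms])
      fix y assume "y \<in> U"
      then have "f differentiable (at y)" "f y \<noteq> 0" using sm_diff[OF Suc.prems(1)] Suc.prems(2) by blast+
      then show "(\<lambda>y. (\<lambda>_. -1) y * pd i f y) y * (\<lambda>y. inverse (f y) * inverse (f y)) y = pd i (\<lambda>y. inverse (f y)) y"
        using pd_inverse[of f y i] by simp
    qed
  qed
qed

context fixes U :: "'n::finite pt set" assumes oU: "open U"
begin

lemma smooth_add: "smooth_on U f \<Longrightarrow> smooth_on U h \<Longrightarrow> smooth_on U (\<lambda>y. f y + h y)"
  unfolding smooth_on_sm by (intro allI, rule sm_add[OF oU]) auto

lemma smooth_mult: "smooth_on U f \<Longrightarrow> smooth_on U h \<Longrightarrow> smooth_on U (\<lambda>y. f y * h y)"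
  unfolding smooth_on_sm by (intro allI, rule sm_mult[OF oU]) auto

lemma smooth_const: "smooth_on U (\<lambda>y. c)"
  unfolding smooth_on_sm by (intro allI, rule sm_const)

lemma smooth_inverse: "smooth_on U f \<Longrightarrow> \<forall>y\<in>U. f y \<noteq> 0 \<Longrightarrow> smooth_on U (\<lambda>y. inverse (f y))"
  unfolding smooth_on_sm by (intro allI, rule sm_inverse[OF oU]) auto

lemma smooth_pd: "smooth_on U f \<Longrightarrow> smooth_on U (pd i f)"
  unfolding smooth_on_sm by (intro allI, rule sm_pd) auto

lemma smooth_pd': "smooth_on U f \<Longrightarrow> smooth_on U (\<lambda>y. pd i f y)"
  by (rule smooth_pd)

lemma smooth_local:
  assumes "smooth_on U f" "\<And>y. y \<in> U \<Longrightarrow> f y = h y" shows "smooth_on U h"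
  unfolding smooth_on_sm
proof
  fix N
  have "sm_upto N U f" using assms(1) unfolding smooth_on_sm by blast
  then show "sm_upto N U h" by (rule sm_local[OF oU _ assms(2)])
qed

lemma smooth_diff: "smooth_on U f \<Longrightarrow> x \<in> U \<Longrightarrow> f differentiable (at x)"
  unfolding smooth_on_sm by (rule sm_diff) auto

lemma smooth_cmult: "smooth_on U f \<Longrightarrow> smooth_on U (\<lambda>y. c * f y)"
  by (rule smooth_mult[OF smooth_const])

lemma smooth_minus: "smooth_on U f \<Longrightarrow> smooth_on U (\<lambda>y. - f y)"
proof -
  assume "smooth_on U f"
  then have "smooth_on U (\<lambda>y. (-1) * f y)" by (rule smooth_cmult)
  then show ?thesis by simp
qed

lemma smooth_sub: "smooth_on U f \<Longrightarrow> smooth_on U h \<Longrightarrow> smooth_on U (\<lambda>y. f y - h y)"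
proof -
  assume "smooth_on U f" "smooth_on U h"
  then have "smooth_on U (\<lambda>y. f y + (- h y))" by (intro smooth_add smooth_minus)
  then show ?thesis by simp
qed

lemma smooth_divide: "smooth_on U f \<Longrightarrow> smooth_on U h \<Longrightarrow> \<forall>y\<in>U. h y \<noteq> 0 \<Longrightarrow> smooth_on U (\<lambda>y. f y / h y)"
proof -
  assume a: "smooth_on U f" "smooth_on U h" "\<forall>y\<in>U. h y \<noteq> 0"
  have "smooth_on U (\<lambda>y. f y * inverse (h y))" by (rule smooth_mult[OF a(1) smooth_inverse[OF a(2,3)]])
  then show ?thesis by (simp add: divide_inverse)
qed

lemma smooth_sum: "finite S \<Longrightarrow> (\<And>k. k \<in> S \<Longrightarrow> smooth_on U (f k)) \<Longrightarrow> smooth_on U (\<lambda>y. \<Sum>k\<in>S. f k y)"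
proof (induction S rule: finite_induct)
  case empty then show ?case using smooth_const by simp
next
  case (insert a F)
  have "smooth_on U (\<lambda>y. f a y + (\<Sum>k\<in>F. f k y))"
  proof (rule smooth_add)
    show "smooth_on U (f a)" by (rule insert.prems) simp
    show "smooth_on U (\<lambda>y. \<Sum>k\<in>F. f k y)" by (rule insert.IH) (rule insert.prems, simp)
  qed
  then show ?case using insert(1,2) by simp
qed

lemma smooth_prod: "finite S \<Longrightarrow> (\<And>k. k \<in> S \<Longrightarrow> smooth_on U (f k)) \<Longrightarrow> smooth_on U (\<lambda>y. \<Prod>k\<in>S. f k y)"
proof (induction S rule: finite_induct)
  case empty then show ?case using smooth_const by simp
next
  case (insert a F)
  have "smooth_on U (\<lambda>y. f a y * (\<Prod>k\<in>F. f k y))"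
  proof (rule smooth_mult)
    show "smooth_on U (f a)" by (rule insert.prems) simp
    show "smooth_on U (\<lambda>y. \<Prod>k\<in>F. f k y)" by (rule insert.IH) (rule insert.prems, simp)
  qed
  then show ?case using insert(1,2) by simp
qed

lemma smooth_det: "(\<And>a b. smooth_on U (\<lambda>y. F y a b)) \<Longrightarrow> smooth_on U (\<lambda>y. det (\<chi> a b. F y a b :: real^'m::finite^'m))"
  unfolding det_def
  apply (rule smooth_sum)
   apply (simp add: finite_permutations)
  apply (rule smooth_cmult)
  apply (rule smooth_prod)
   apply simp
  apply (simp only: vec_lambda_beta)
  done

end

lemma matrix_inv_props:
  fixes A :: "real^'n::finite^'n"
  assumes "det A \<noteq> 0"
  shows "A ** matrix_inv A = mat 1" "matrix_inv A ** A = mat 1"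
proof -
  have "invertible A" using assms invertible_det_nz by blast
  then have "\<exists>A'. A ** A' = mat 1 \<and> A' ** A = mat 1" unfolding invertible_def by blast
  then have "A ** matrix_inv A = mat 1 \<and> matrix_inv A ** A = mat 1"
    unfolding matrix_inv_def by (rule someI_ex)
  then show "A ** matrix_inv A = mat 1" "matrix_inv A ** A = mat 1" by auto
qed

lemma matrix_inv_cramer:
  fixes A :: "real^'n::finite^'n"
  assumes "det A \<noteq> 0"
  shows "matrix_inv A $ k $ j = det (\<chi> a l. if l = k then (if a = j then 1 else 0) else A $ a $ l) / det A"
proof -
  let ?H = "matrix_inv A"
  let ?x = "\<chi> k. ?H $ k $ j"
  let ?b = "\<chi> a. if a = j then 1 else (0::real)"
  have "A *v ?x = (\<chi> a. (A ** ?H) $ a $ j)"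
    by (simp add: vec_eq_iff matrix_vector_mult_def matrix_matrix_mult_def)
  also have "\<dots> = ?b" using matrix_inv_props(1)[OF assms] by (simp add: vec_eq_iff mat_def)
  finally have "A *v ?x = ?b" .
  then have "?x = (\<chi> k. det(\<chi> i j. if j=k then ?b$i else A$i$j) / det A)"
    using cramer[OF assms] by blast
  then have "?x $ k = (\<chi> k. det(\<chi> i j. if j=k then ?b$i else A$i$j) / det A) $ k" by simp
  then show ?thesis by (simp cong: if_cong)
qed

context fixes U :: "'n::finite pt set" and g :: "'n tens2"
  assumes sr: "semi_riemannian U g"
begin

lemma oU: "open U" using sr unfolding semi_riemannian_def by blast

lemma g_smooth: "smooth_on U (\<lambda>y. g y i j)" using sr unfolding semi_riemannian_def by blast

lemma g_sym: "y \<in> U \<Longrightarrow> g y i j = g y j i" using sr unfolding semi_riemannian_def by blast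

lemma g_det: "y \<in> U \<Longrightarrow> det (gmat g y) \<noteq> 0" using sr unfolding semi_riemannian_def by blast

lemma ginv_smooth: "smooth_on U (\<lambda>y. ginv g y k j)"
proof (rule smooth_local[OF oU])
  show "smooth_on U (\<lambda>y. det (\<chi> a l. if l = k then (if a = j then 1 else 0) else g y a l) / det (\<chi> a l. g y a l))"
  proof (rule smooth_divide[OF oU])
    show "smooth_on U (\<lambda>y. det (\<chi> a l. if l = k then (if a = j then 1 else 0) else g y a l))"
    proof (rule smooth_det[OF oU])
      fix a l show "smooth_on U (\<lambda>y. if l = k then (if a = j then 1 else 0) else g y a l)"
        by (cases "l = k") (simp_all add: smooth_const[OF oU] g_smooth)
    qed
    show "smooth_on U (\<lambda>y. det (\<chi> a l. g y a l))" by (rule smooth_det[OF oU g_smooth])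
    show "\<forall>y\<in>U. det (\<chi> a l. g y a l) \<noteq> 0" using g_det unfolding gmat_def by blast
  qed
  fix y assume "y \<in> U"
  then show "det (\<chi> a l. if l = k then (if a = j then 1 else 0) else g y a l) / det (\<chi> a l. g y a l) = ginv g y k j"
    using matrix_inv_cramer[OF g_det[OF \<open>y \<in> U\<close>], of k j]
    unfolding ginv_def gmat_def by (simp cong: if_cong)
qed

lemmas sm_rules = smooth_add[OF oU] smooth_sub[OF oU] smooth_mult[OF oU] smooth_cmult[OF oU]
  smooth_sum[OF oU finite_class.finite_UNIV] smooth_pd'[OF oU] smooth_const[OF oU]

lemma chr_smooth: "smooth_on U (\<lambda>y. christoffel g y k i j)"
  unfolding christoffel_def
  by (intro sm_rules ginv_smooth g_smooth)

lemma Rup_smooth: "smooth_on U (\<lambda>y. Rup g y l i j k)"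
  unfolding Rup_def
  by (intro sm_rules chr_smooth)

lemma Riem_smooth: "smooth_on U (\<lambda>y. Riem g y i j k h)"
  unfolding Riem_def
  by (intro sm_rules Rup_smooth g_smooth)

lemma Ric_smooth: "smooth_on U (\<lambda>y. Ric g y j k)"
  unfolding Ric_def
  by (intro sm_rules Rup_smooth)

lemma scal_smooth: "smooth_on U (\<lambda>y. scal g y)"
  unfolding scal_def
  by (intro sm_rules Ric_smooth ginv_smooth)

end

lemma mm_add_r: "((A::real^'n^'n) + B) ** C = A ** C + B ** C"
  by (simp add: matrix_matrix_mult_def vec_eq_iff sum.distrib ring_distribs)
lemma mm_add_l: "(A::real^'n^'n) ** (B + C) = A ** B + A ** C"
  by (simp add: matrix_matrix_mult_def vec_eq_iff sum.distrib ring_distribs)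
lemma mm_sub_l: "(A::real^'n^'n) ** (B - C) = A ** B - A ** C"
  by (simp add: matrix_matrix_mult_def vec_eq_iff sum_subtractf ring_distribs)
lemma mm_neg_l: "(- (A::real^'n^'n)) ** B = - (A ** B)"
  by (simp add: matrix_matrix_mult_def vec_eq_iff sum_negf)
lemma transpose_add': "transpose ((A::real^'n^'n) + B) = transpose A + transpose B"
  by (simp add: transpose_def vec_eq_iff)
lemma transpose_sub': "transpose ((A::real^'n^'n) - B) = transpose A - transpose B"
  by (simp add: transpose_def vec_eq_iff)
lemma trace_neg': "trace (- (A::real^'n^'n)) = - trace A"
  by (simp add: trace_def sum_negf)

lemma scal_alg:
  fixes G H Gm dG dH Sm dS N :: "real^'n^'n"
  assumes GH: "G ** H = mat 1" and HG: "H ** G = mat 1"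
    and dG: "dG = transpose Gm ** G + G ** Gm"
    and dH: "dH ** G + H ** dG = 0"
    and N: "N = dS - transpose Gm ** Sm - Sm ** Gm"
  shows "trace (dH ** transpose Sm) + trace (H ** transpose dS) = trace (H ** transpose N)"
proof -
  let ?X = "H ** transpose Sm"
  have dHG: "dH ** G = - (H ** dG)" using dH by (simp add: eq_neg_iff_add_eq_0)
  have e: "(H ** dG) ** ?X = H ** transpose Gm ** transpose Sm + Gm ** ?X"
  proof -
    have "(H ** dG) ** ?X = (H ** transpose Gm) ** (G ** H) ** transpose Sm + (H ** G) ** Gm ** ?X"
      unfolding dG mm_add_l mm_add_r by (simp add: matrix_mul_assoc)
    then show ?thesis by (simp add: GH HG)
  qed
  have "dH ** transpose Sm = (dH ** G) ** ?X"
  proof -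
    have "(dH ** G) ** ?X = dH ** ((G ** H) ** transpose Sm)" by (simp add: matrix_mul_assoc)
    then show ?thesis by (simp add: GH)
  qed
  also have "\<dots> = - ((H ** dG) ** ?X)" by (simp add: dHG mm_neg_l)
  also have "\<dots> = - (H ** transpose Gm ** transpose Sm + Gm ** ?X)" by (simp only: e)
  finally have 1: "trace (dH ** transpose Sm) = - trace (H ** transpose Gm ** transpose Sm) - trace (?X ** Gm)"
    by (simp add: trace_neg' trace_sub trace_mul_sym[of Gm])
  have 2: "H ** transpose N = H ** transpose dS - ?X ** Gm - H ** transpose Gm ** transpose Sm"
    unfolding N transpose_sub' matrix_transpose_mul mm_sub_l by (simp add: matrix_mul_assoc)
  show ?thesis unfolding 2 1 trace_sub by simp
qed

lemma pd_sub: "f differentiable (at x) \<Longrightarrow> h differentiable (at x) \<Longrightarrow>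
   pd i (\<lambda>y. f y - h y) x = pd i f x - pd i h x"
proof -
  assume a: "f differentiable (at x)" "h differentiable (at x)"
  have "((\<lambda>y. f y - h y) has_derivative (\<lambda>v. frechet_derivative f (at x) v - frechet_derivative h (at x) v)) (at x)" (is ?D)
    by (rule has_derivative_diff[OF fd_works[OF a(1)] fd_works[OF a(2)]])
  have e: "frechet_derivative (\<lambda>y. f y - h y) (at x) = (\<lambda>v. frechet_derivative f (at x) v - frechet_derivative h (at x) v)"
    using frechet_derivative_at[OF \<open>?D\<close>] by simp
  show ?thesis unfolding pd_def e by simp
qed

lemma pd_sum: "finite S \<Longrightarrow> (\<And>k. k \<in> S \<Longrightarrow> f k differentiable (at x)) \<Longrightarrow>
   pd i (\<lambda>y. \<Sum>k\<in>S. f k y) x = (\<Sum>k\<in>S. pd i (f k) x)"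
proof (induction S rule: finite_induct)
  case empty then show ?case by (simp add: pd_const)
next
  case (insert a F)
  have d1: "f a differentiable (at x)" by (rule insert.prems) simp
  have d2: "(\<lambda>y. \<Sum>k\<in>F. f k y) differentiable (at x)"
    by (rule differentiable_sum) (use insert in auto)
  have "pd i (\<lambda>y. \<Sum>k\<in>insert a F. f k y) x = pd i (\<lambda>y. f a y + (\<Sum>k\<in>F. f k y)) x"
    using insert(1,2) by simp
  also have "\<dots> = pd i (f a) x + pd i (\<lambda>y. \<Sum>k\<in>F. f k y) x" by (rule pd_add[OF d1 d2])
  also have "pd i (\<lambda>y. \<Sum>k\<in>F. f k y) x = (\<Sum>k\<in>F. pd i (f k) x)"
    by (rule insert.IH) (rule insert.prems, simp)
  finally show ?case using insert(1,2) by simp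
qed

context fixes U :: "'n::finite pt set" and g :: "'n tens2" and x :: "'n pt"
  assumes sr: "semi_riemannian U g" and xU: "x \<in> U"
begin

lemma dg: "(\<lambda>y. g y a b) differentiable (at x)"
  by (rule smooth_diff[OF oU[OF sr] g_smooth[OF sr] xU])
lemma dginv: "(\<lambda>y. ginv g y a b) differentiable (at x)"
  by (rule smooth_diff[OF oU[OF sr] ginv_smooth[OF sr] xU])
lemma dRic: "(\<lambda>y. Ric g y a b) differentiable (at x)"
  by (rule smooth_diff[OF oU[OF sr] Ric_smooth[OF sr] xU])
lemma dRiem: "(\<lambda>y. Riem g y a b c d) differentiable (at x)"
  by (rule smooth_diff[OF oU[OF sr] Riem_smooth[OF sr] xU])
lemma dscal: "(\<lambda>y. scal g y) differentiable (at x)"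
  by (rule smooth_diff[OF oU[OF sr] scal_smooth[OF sr] xU])

lemma GH: "gmat g x ** matrix_inv (gmat g x) = mat 1" by (rule matrix_inv_props(1)[OF g_det[OF sr xU]])
lemma HG: "matrix_inv (gmat g x) ** gmat g x = mat 1" by (rule matrix_inv_props(2)[OF g_det[OF sr xU]])

lemma pd_gsym: "pd i (\<lambda>y. g y b a) x = pd i (\<lambda>y. g y a b) x"
  by (rule pd_local[OF oU[OF sr] xU]) (rule g_sym[OF sr])

definition Gam :: "'n \<Rightarrow> real^'n^'n" where "Gam i = (\<chi> m a. christoffel g x m i a)"
definition Dp :: "'n \<Rightarrow> real^'n^'n" where
  "Dp i = (\<chi> l a. 1/2 * (pd i (\<lambda>y. g y a l) x + pd a (\<lambda>y. g y i l) x - pd l (\<lambda>y. g y i a) x))"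

lemma Gam_eq: "Gam i = matrix_inv (gmat g x) ** Dp i"
  unfolding Gam_def Dp_def
  by (simp add: vec_eq_iff matrix_matrix_mult_def christoffel_def ginv_def sum_distrib_left mult_ac)

lemma GGam: "gmat g x ** Gam i = Dp i"
  unfolding Gam_eq matrix_mul_assoc GH by simp

lemma GGam_entry: "(\<Sum>m\<in>UNIV. g x p m * christoffel g x m i q) =
   1/2 * (pd i (\<lambda>y. g y q p) x + pd q (\<lambda>y. g y i p) x - pd p (\<lambda>y. g y i q) x)"
proof -
  have "(gmat g x ** Gam i) $ p $ q = Dp i $ p $ q" by (simp only: GGam)
  then show ?thesis unfolding Gam_def Dp_def gmat_def matrix_matrix_mult_def by simp
qed

lemma metric_compat: "pd i (\<lambda>y. g y a b) x =
   (\<Sum>m\<in>UNIV. christoffel g x m i a * g x m b + christoffel g x m i b * g x a m)"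
proof -
  have "(\<Sum>m\<in>UNIV. christoffel g x m i a * g x m b + christoffel g x m i b * g x a m)
      = (\<Sum>m\<in>UNIV. g x b m * christoffel g x m i a) + (\<Sum>m\<in>UNIV. g x a m * christoffel g x m i b)"
    by (simp add: sum.distrib g_sym[OF sr xU, of _ b] mult.commute)
  also have "\<dots> = pd i (\<lambda>y. g y a b) x"
    unfolding GGam_entry using pd_gsym[of i a b] by (simp add: field_simps)
  finally show ?thesis by simp
qed

lemma cov2_g: "cov2 g g x i a b = 0"
  unfolding cov2_def using metric_compat by simp

end

context fixes U :: "'n::finite pt set" and g :: "'n tens2" and x :: "'n pt"
  assumes sr: "semi_riemannian U g" and xU: "x \<in> U"
begin

lemma Gam_nth: "Gam g x i $ k $ a = christoffel g x k i a"
  by (simp add: Gam_def[OF sr xU])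

lemma dG_eq: "(\<chi> a b. pd i (\<lambda>y. g y a b) x) = transpose (Gam g x i) ** gmat g x + gmat g x ** Gam g x i"
  unfolding vec_eq_iff
proof (intro allI)
  fix a b
  show "(\<chi> a b. pd i (\<lambda>y. g y a b) x) $ a $ b = (transpose (Gam g x i) ** gmat g x + gmat g x ** Gam g x i) $ a $ b"
    using metric_compat[OF sr xU, of i a b]
    by (simp add: Gam_nth matrix_matrix_mult_def transpose_def gmat_def sum.distrib mult.commute)
qed

lemma dH_eq: "(\<chi> a b. pd i (\<lambda>y. ginv g y a b) x) ** gmat g x
    + matrix_inv (gmat g x) ** (\<chi> a b. pd i (\<lambda>y. g y a b) x) = 0"
  unfolding vec_eq_iff
proof (intro allI)
  fix j k
  have loc: "(\<Sum>m\<in>UNIV. ginv g y j m * g y m k) = (if j = k then 1 else 0)" if y: "y \<in> U" for y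
  proof -
    have "(matrix_inv (gmat g y) ** gmat g y) $ j $ k = mat 1 $ j $ k"
      by (simp only: matrix_inv_props(2)[OF g_det[OF sr y]])
    then show ?thesis unfolding matrix_matrix_mult_def ginv_def gmat_def mat_def by simp
  qed
  have "pd i (\<lambda>y. \<Sum>m\<in>UNIV. ginv g y j m * g y m k) x = pd i (\<lambda>y. if j = k then 1 else 0) x"
    by (rule pd_local[OF oU[OF sr] xU]) (rule loc)
  also have "\<dots> = 0" by (rule pd_const)
  finally have z: "pd i (\<lambda>y. \<Sum>m\<in>UNIV. ginv g y j m * g y m k) x = 0" .
  have "pd i (\<lambda>y. \<Sum>m\<in>UNIV. ginv g y j m * g y m k) x
      = (\<Sum>m\<in>UNIV. pd i (\<lambda>y. ginv g y j m * g y m k) x)"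
    by (rule pd_sum) (simp_all add: dginv[OF sr xU] dg[OF sr xU])
  also have "\<dots> = (\<Sum>m\<in>UNIV. pd i (\<lambda>y. ginv g y j m) x * g x m k + ginv g x j m * pd i (\<lambda>y. g y m k) x)"
    by (rule sum.cong[OF refl], rule pd_mult[OF dginv[OF sr xU] dg[OF sr xU]])
  finally show "((\<chi> a b. pd i (\<lambda>y. ginv g y a b) x) ** gmat g x
    + matrix_inv (gmat g x) ** (\<chi> a b. pd i (\<lambda>y. g y a b) x)) $ j $ k = 0 $ j $ k"
    using z by (simp add: matrix_matrix_mult_def gmat_def ginv_def sum.distrib)
qed

lemma N_eq: "(\<chi> a b. cov2 g (Ric g) x i a b) = (\<chi> a b. pd i (\<lambda>y. Ric g y a b) x)
   - transpose (Gam g x i) ** (\<chi> a b. Ric g x a b) - (\<chi> a b. Ric g x a b) ** Gam g x i"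
  by (simp add: Gam_nth vec_eq_iff cov2_def matrix_matrix_mult_def transpose_def sum.distrib mult.commute algebra_simps)

lemma pd_scal_eq: "pd i (scal g) x = trace ((\<chi> a b. pd i (\<lambda>y. ginv g y a b) x) ** transpose (\<chi> a b. Ric g x a b))
   + trace (matrix_inv (gmat g x) ** transpose (\<chi> a b. pd i (\<lambda>y. Ric g y a b) x))"
proof -
  have "pd i (scal g) x = pd i (\<lambda>y. \<Sum>j\<in>UNIV. \<Sum>k\<in>UNIV. ginv g y j k * Ric g y j k) x"
    unfolding scal_def by simp
  also have "\<dots> = (\<Sum>j\<in>UNIV. pd i (\<lambda>y. \<Sum>k\<in>UNIV. ginv g y j k * Ric g y j k) x)"
  proof (rule pd_sum)
    fix j show "(\<lambda>y. \<Sum>k\<in>UNIV. ginv g y j k * Ric g y j k) differentiable (at x)"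
      by (rule differentiable_sum) (simp_all add: dginv[OF sr xU] dRic[OF sr xU])
  qed simp
  also have "\<dots> = (\<Sum>j\<in>UNIV. \<Sum>k\<in>UNIV. pd i (\<lambda>y. ginv g y j k * Ric g y j k) x)"
    by (rule sum.cong[OF refl], rule pd_sum) (simp_all add: dginv[OF sr xU] dRic[OF sr xU])
  also have "\<dots> = (\<Sum>j\<in>UNIV. \<Sum>k\<in>UNIV. pd i (\<lambda>y. ginv g y j k) x * Ric g x j k + ginv g x j k * pd i (\<lambda>y. Ric g y j k) x)"
    by (rule sum.cong[OF refl], rule sum.cong[OF refl], rule pd_mult[OF dginv[OF sr xU] dRic[OF sr xU]])
  finally show ?thesis
    by (simp add: trace_def matrix_matrix_mult_def transpose_def ginv_def sum.distrib)
qed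

lemma pd_scal_trace: "pd i (scal g) x = trace (matrix_inv (gmat g x) ** transpose (\<chi> a b. cov2 g (Ric g) x i a b))"
  unfolding pd_scal_eq
  by (rule scal_alg[OF GH[OF sr xU] HG[OF sr xU] dG_eq dH_eq N_eq])

lemma pd_scal:
  assumes rg: "ricci_gen_recurrent U g Pb Fb"
  shows "pd i (scal g) x = Pb x i * scal g x + real CARD('n) * Fb x i"
proof -
  have N: "cov2 g (Ric g) x i a b = Pb x i * Ric g x a b + Fb x i * g x a b" for a b
    using rg xU unfolding ricci_gen_recurrent_def by blast
  have one: "(\<Sum>k\<in>UNIV. ginv g x j k * g x j k) = 1" for j
  proof -
    have "(matrix_inv (gmat g x) ** gmat g x) $ j $ j = mat 1 $ j $ j" by (simp only: HG[OF sr xU])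
    then have "(\<Sum>k\<in>UNIV. ginv g x j k * g x k j) = 1" unfolding matrix_matrix_mult_def ginv_def gmat_def mat_def by simp
    then show ?thesis using g_sym[OF sr xU] by simp
  qed
  have "pd i (scal g) x = (\<Sum>j\<in>UNIV. \<Sum>k\<in>UNIV. ginv g x j k * (Pb x i * Ric g x j k + Fb x i * g x j k))"
    unfolding pd_scal_trace by (simp add: trace_def matrix_matrix_mult_def transpose_def ginv_def N)
  also have "\<dots> = Pb x i * (\<Sum>j\<in>UNIV. \<Sum>k\<in>UNIV. ginv g x j k * Ric g x j k)
      + Fb x i * (\<Sum>j\<in>UNIV. \<Sum>k\<in>UNIV. ginv g x j k * g x j k)"
    by (simp add: ring_distribs sum.distrib sum_distrib_left mult_ac)
  also have "\<dots> = Pb x i * scal g x + real CARD('n) * Fb x i"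
    unfolding one scal_def by simp
  finally show ?thesis .
qed

end

definition qp :: "'n::finite tens2 \<Rightarrow> 'n tens2 \<Rightarrow> 'n tens4" where
  "qp A E y a b c d = A y b c * E y a d - A y a c * E y b d"

lemma cov4_lin:
  fixes T1 T2 T3 :: "'n::finite tens4"
  assumes d1: "\<And>a b c d. (\<lambda>y. T1 y a b c d) differentiable (at x)"
    and d2: "\<And>a b c d. (\<lambda>y. T2 y a b c d) differentiable (at x)"
    and d3: "\<And>a b c d. (\<lambda>y. T3 y a b c d) differentiable (at x)"
    and df1: "f1 differentiable (at x)" and df2: "f2 differentiable (at x)"
  shows "cov4 g (\<lambda>y a b c d. T1 y a b c d + f1 y * T2 y a b c d + f2 y * T3 y a b c d) x i a b c d
    = cov4 g T1 x i a b c d + pd i f1 x * T2 x a b c d + f1 x * cov4 g T2 x i a b c d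
      + pd i f2 x * T3 x a b c d + f2 x * cov4 g T3 x i a b c d"
proof -
  have p: "pd i (\<lambda>y. T1 y a b c d + f1 y * T2 y a b c d + f2 y * T3 y a b c d) x
    = pd i (\<lambda>y. T1 y a b c d) x + (pd i f1 x * T2 x a b c d + f1 x * pd i (\<lambda>y. T2 y a b c d) x)
      + (pd i f2 x * T3 x a b c d + f2 x * pd i (\<lambda>y. T3 y a b c d) x)"
    by (simp add: pd_add pd_mult d1 d2 d3 df1 df2)
  show ?thesis
    unfolding cov4_def p
    by (simp add: algebra_simps sum.distrib sum_subtractf sum_distrib_left)
qed

lemma cov4_kn:
  fixes A E :: "'n::finite tens2"
  assumes dA: "\<And>a b. (\<lambda>y. A y a b) differentiable (at x)"
    and dE: "\<And>a b. (\<lambda>y. E y a b) differentiable (at x)"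
  shows "cov4 g (kn A E) x i a b c d =
      (cov2 g A x i a d * E x b c + A x a d * cov2 g E x i b c)
    + (cov2 g A x i b c * E x a d + A x b c * cov2 g E x i a d)
    - (cov2 g A x i a c * E x b d + A x a c * cov2 g E x i b d)
    - (cov2 g A x i b d * E x a c + A x b d * cov2 g E x i a c)"
proof -
  have p: "pd i (\<lambda>y. kn A E y a b c d) x =
      (pd i (\<lambda>y. A y a d) x * E x b c + A x a d * pd i (\<lambda>y. E y b c) x)
    + (pd i (\<lambda>y. A y b c) x * E x a d + A x b c * pd i (\<lambda>y. E y a d) x)
    - (pd i (\<lambda>y. A y a c) x * E x b d + A x a c * pd i (\<lambda>y. E y b d) x)
    - (pd i (\<lambda>y. A y b d) x * E x a c + A x b d * pd i (\<lambda>y. E y a c) x)"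
    unfolding kn_def by (simp add: pd_add pd_sub pd_mult dA dE)
  show ?thesis
    unfolding cov4_def p cov2_def
    by (simp add: kn_def algebra_simps sum.distrib sum_subtractf sum_distrib_left sum_distrib_right)
qed

lemma cov4_qp:
  fixes A E :: "'n::finite tens2"
  assumes dA: "\<And>a b. (\<lambda>y. A y a b) differentiable (at x)"
    and dE: "\<And>a b. (\<lambda>y. E y a b) differentiable (at x)"
  shows "cov4 g (qp A E) x i a b c d =
      (cov2 g A x i b c * E x a d + A x b c * cov2 g E x i a d)
    - (cov2 g A x i a c * E x b d + A x a c * cov2 g E x i b d)"
proof -
  have p: "pd i (\<lambda>y. qp A E y a b c d) x =
      (pd i (\<lambda>y. A y b c) x * E x a d + A x b c * pd i (\<lambda>y. E y a d) x)
    - (pd i (\<lambda>y. A y a c) x * E x b d + A x a c * pd i (\<lambda>y. E y b d) x)"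
    unfolding qp_def by (simp add: pd_sub pd_mult dA dE)
  show ?thesis
    unfolding cov4_def p cov2_def
    by (simp add: qp_def algebra_simps sum.distrib sum_subtractf sum_distrib_left sum_distrib_right)
qed

lemma alg_conf:
  fixes n R SS GS GG Pi Phi Psi Th Pb Fb k dk :: real
  assumes n2: "n - 2 \<noteq> 0" and n1: "n - 1 \<noteq> 0" and dk: "dk = Pb * k + n * Fb"
  shows "(Pi * R + Phi * SS + Psi * GS + Th * GG) + 0 * GS + (- (1 / (n - 2))) * (Pb * GS + Fb * GG)
      + dk / (2 * (n - 1) * (n - 2)) * GG + k / (2 * (n - 1) * (n - 2)) * 0
    = Pi * (R - 1 / (n - 2) * GS + k / (2 * (n - 1) * (n - 2)) * GG) + Phi * SS
      + (Psi - (Pb - Pi) / (n - 2)) * GS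
      + (Th - Fb / (n - 2) + (k * Pb + n * Fb - k * Pi) / (2 * (n - 1) * (n - 2))) * GG"
  using n2 n1 unfolding dk by (simp add: divide_inverse algebra_simps)

lemma alg_conc:
  fixes n R SS GS GG Pi Phi Psi Th Pb Fb k dk :: real
  assumes n0: "n \<noteq> 0" and n1: "n - 1 \<noteq> 0" and dk: "dk = Pb * k + n * Fb"
  shows "(Pi * R + Phi * SS + Psi * GS + Th * GG) + 0 * GG + 0 * 0
      + dk / - (2 * n * (n - 1)) * GG + k / - (2 * n * (n - 1)) * 0
    = Pi * (R - k / (2 * n * (n - 1)) * GG) + Phi * SS + Psi * GS
      + (Th - (k * Pb + n * Fb - k * Pi) / (2 * n * (n - 1))) * GG"
  using n0 n1 unfolding dk by (simp add: divide_inverse algebra_simps) (simp add: field_simps)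

lemma alg_conh:
  fixes n R SS GS GG Pi Phi Psi Th Pb Fb :: real
  assumes n2: "n - 2 \<noteq> 0"
  shows "(Pi * R + Phi * SS + Psi * GS + Th * GG) + 0 * GS + (- (1 / (n - 2))) * (Pb * GS + Fb * GG)
      + 0 * GG + 0 * 0
    = Pi * (R - 1 / (n - 2) * GS) + Phi * SS + (Psi - (Pb - Pi) / (n - 2)) * GS
      + (Th - Fb / (n - 2)) * GG"
  using n2 by (simp add: divide_inverse algebra_simps)

lemma alg_proj:
  fixes n R SS GS GG Pi Phi Psi Th Pb Fb Q QG :: real
  assumes n1: "n - 1 \<noteq> 0" and QG: "GG = 2 * QG"
  shows "(Pi * R + Phi * SS + Psi * GS + Th * GG) + 0 * Q + (- (1 / (n - 1))) * (Pi * Q + Fb * QG)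
      + 0 * GG + 0 * 0
    = Pi * (R - 1 / (n - 1) * Q) + Phi * SS + Psi * GS + (Th - Fb / (2 * (n - 1))) * GG"
  using n1 unfolding QG by (simp add: divide_inverse algebra_simps) (simp add: field_simps)

lemma pd_divc: "f differentiable (at x) \<Longrightarrow> pd i (\<lambda>y. f y / c) x = pd i f x / c"
proof -
  assume d: "f differentiable (at x)"
  have "pd i (\<lambda>y. f y * (\<lambda>y. inverse c) y) x = pd i f x * inverse c + f x * pd i (\<lambda>y. inverse c) x"
    by (rule pd_mult[OF d differentiable_const])
  then show ?thesis by (simp add: divide_inverse pd_const)
qed

context
  fixes U :: "'n::finite pt set" and g :: "'n tens2" and x :: "'n pt"
    and Pb Fb Pi1 Phi1 Psi1 Theta1 :: "'n form1"
  assumes sr: "semi_riemannian U g" and xU: "x \<in> U"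
    and rg: "ricci_gen_recurrent U g Pb Fb"
    and sgk: "SGK U g (Riem g) Pi1 Phi1 Psi1 Theta1"
begin

lemma R_eq: "cov4 g (Riem g) x i a b c d = Pi1 x i * Riem g x a b c d + Phi1 x i * kn (Ric g) (Ric g) x a b c d
       + Psi1 x i * kn g (Ric g) x a b c d + Theta1 x i * kn g g x a b c d"
  using sgk xU unfolding SGK_def by blast

lemma cS: "cov2 g (Ric g) x i a b = Pb x i * Ric g x a b + Fb x i * g x a b"
  using rg xU unfolding ricci_gen_recurrent_def by blast

lemma KS_eq: "cov4 g (kn g (Ric g)) x i a b c d = Pb x i * kn g (Ric g) x a b c d + Fb x i * kn g g x a b c d"
  unfolding cov4_kn[OF dg[OF sr xU] dRic[OF sr xU]] cov2_g[OF sr xU] cS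
  by (simp add: kn_def algebra_simps)

lemma KG_eq: "cov4 g (kn g g) x i a b c d = 0"
  unfolding cov4_kn[OF dg[OF sr xU] dg[OF sr xU]] cov2_g[OF sr xU] by simp

lemma QP_eq: "cov4 g (qp (Ric g) g) x i a b c d = Pb x i * qp (Ric g) g x a b c d + Fb x i * qp g g x a b c d"
  unfolding cov4_qp[OF dRic[OF sr xU] dg[OF sr xU]] cov2_g[OF sr xU] cS
  by (simp add: qp_def algebra_simps)

lemma PS: "pd i (scal g) x = Pb x i * scal g x + real CARD('n) * Fb x i"
  by (rule pd_scal[OF sr xU rg])

lemma dKS: "(\<lambda>y. kn g (Ric g) y a b c d) differentiable (at x)"
  unfolding kn_def by (simp add: dg[OF sr xU] dRic[OF sr xU])
lemma dKG: "(\<lambda>y. kn g g y a b c d) differentiable (at x)"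
  unfolding kn_def by (simp add: dg[OF sr xU])
lemma dQP: "(\<lambda>y. qp (Ric g) g y a b c d) differentiable (at x)"
  unfolding qp_def by (simp add: dg[OF sr xU] dRic[OF sr xU])
lemma dsc: "(\<lambda>y. scal g y / c) differentiable (at x)"
proof -
  have "(\<lambda>y. scal g y * (\<lambda>y. inverse c) y) differentiable (at x)"
    by (rule differentiable_mult[OF dscal[OF sr xU] differentiable_const])
  then show ?thesis by (simp add: divide_inverse)
qed

lemmas dR = dRiem[OF sr xU]

lemma conf_pt:
  assumes n3: "CARD('n) \<ge> 3"
  shows "cov4 g (conformal g) x i a b c d = Pi1 x i * conformal g x a b c d
    + Phi1 x i * kn (Ric g) (Ric g) x a b c d
    + (Psi1 x i - (Pb x i - Pi1 x i) / (real CARD('n) - 2)) * kn g (Ric g) x a b c d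
    + (Theta1 x i - Fb x i / (real CARD('n) - 2)
              + (scal g x * Pb x i + real CARD('n) * Fb x i - scal g x * Pi1 x i)
                / (2 * (real CARD('n) - 1) * (real CARD('n) - 2))) * kn g g x a b c d"
proof -
  let ?n = "real CARD('n)"
  have n2: "?n - 2 \<noteq> 0" and n1: "?n - 1 \<noteq> 0" using n3 by auto
  have T: "conformal g = (\<lambda>y a b c d. Riem g y a b c d + (\<lambda>y. - (1 / (?n - 2))) y * kn g (Ric g) y a b c d
      + (\<lambda>y. scal g y / (2 * (?n - 1) * (?n - 2))) y * kn g g y a b c d)"
    by (simp add: fun_eq_iff conformal_def dimr_def)
  have L: "cov4 g (conformal g) x i a b c d = cov4 g (Riem g) x i a b c d
      + pd i (\<lambda>y. - (1 / (?n - 2))) x * kn g (Ric g) x a b c d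
      + (- (1 / (?n - 2))) * cov4 g (kn g (Ric g)) x i a b c d
      + pd i (\<lambda>y. scal g y / (2 * (?n - 1) * (?n - 2))) x * kn g g x a b c d
      + scal g x / (2 * (?n - 1) * (?n - 2)) * cov4 g (kn g g) x i a b c d"
    unfolding T by (rule cov4_lin[OF dR dKS dKG differentiable_const dsc])
  show ?thesis
    unfolding L R_eq KS_eq KG_eq pd_const pd_divc[OF dscal[OF sr xU]] conformal_def dimr_def
    by (rule alg_conf[OF n2 n1 PS])
qed

lemma conc_pt:
  assumes n3: "CARD('n) \<ge> 3"
  shows "cov4 g (concircular g) x i a b c d = Pi1 x i * concircular g x a b c d
    + Phi1 x i * kn (Ric g) (Ric g) x a b c d
    + Psi1 x i * kn g (Ric g) x a b c d
    + (Theta1 x i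
              - (scal g x * Pb x i + real CARD('n) * Fb x i - scal g x * Pi1 x i)
                / (2 * real CARD('n) * (real CARD('n) - 1))) * kn g g x a b c d"
proof -
  let ?n = "real CARD('n)"
  have n0: "?n \<noteq> 0" and n1: "?n - 1 \<noteq> 0" using n3 by auto
  have T: "concircular g = (\<lambda>y a b c d. Riem g y a b c d + (\<lambda>y. 0) y * kn g g y a b c d
      + (\<lambda>y. scal g y / - (2 * ?n * (?n - 1))) y * kn g g y a b c d)"
    by (simp add: fun_eq_iff concircular_def dimr_def)
  have L: "cov4 g (concircular g) x i a b c d = cov4 g (Riem g) x i a b c d
      + pd i (\<lambda>y. 0) x * kn g g x a b c d
      + 0 * cov4 g (kn g g) x i a b c d
      + pd i (\<lambda>y. scal g y / - (2 * ?n * (?n - 1))) x * kn g g x a b c d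
      + scal g x / - (2 * ?n * (?n - 1)) * cov4 g (kn g g) x i a b c d"
    unfolding T by (rule cov4_lin[OF dR dKG dKG differentiable_const dsc])
  show ?thesis
    unfolding L R_eq KG_eq pd_const pd_divc[OF dscal[OF sr xU]] concircular_def dimr_def
    by (rule alg_conc[OF n0 n1 PS])
qed

lemma conh_pt:
  assumes n3: "CARD('n) \<ge> 3"
  shows "cov4 g (conharmonic g) x i a b c d = Pi1 x i * conharmonic g x a b c d
    + Phi1 x i * kn (Ric g) (Ric g) x a b c d
    + (Psi1 x i - (Pb x i - Pi1 x i) / (real CARD('n) - 2)) * kn g (Ric g) x a b c d
    + (Theta1 x i - Fb x i / (real CARD('n) - 2)) * kn g g x a b c d"
proof -
  let ?n = "real CARD('n)"
  have n2: "?n - 2 \<noteq> 0" using n3 by auto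
  have T: "conharmonic g = (\<lambda>y a b c d. Riem g y a b c d + (\<lambda>y. - (1 / (?n - 2))) y * kn g (Ric g) y a b c d
      + (\<lambda>y. 0) y * kn g g y a b c d)"
    by (simp add: fun_eq_iff conharmonic_def dimr_def)
  have L: "cov4 g (conharmonic g) x i a b c d = cov4 g (Riem g) x i a b c d
      + pd i (\<lambda>y. - (1 / (?n - 2))) x * kn g (Ric g) x a b c d
      + (- (1 / (?n - 2))) * cov4 g (kn g (Ric g)) x i a b c d
      + pd i (\<lambda>y. 0) x * kn g g x a b c d
      + 0 * cov4 g (kn g g) x i a b c d"
    unfolding T by (rule cov4_lin[OF dR dKS dKG differentiable_const differentiable_const])
  show ?thesis
    unfolding L R_eq KS_eq KG_eq pd_const conharmonic_def dimr_def
    by (rule alg_conh[OF n2])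
qed

lemma proj_pt:
  assumes n3: "CARD('n) \<ge> 3" and PP: "Pi1 x i = Pb x i"
  shows "cov4 g (projective g) x i a b c d = Pi1 x i * projective g x a b c d
    + Phi1 x i * kn (Ric g) (Ric g) x a b c d
    + Psi1 x i * kn g (Ric g) x a b c d
    + (Theta1 x i - Fb x i / (2 * (real CARD('n) - 1))) * kn g g x a b c d"
proof -
  let ?n = "real CARD('n)"
  have n1: "?n - 1 \<noteq> 0" using n3 by auto
  have T: "projective g = (\<lambda>y a b c d. Riem g y a b c d + (\<lambda>y. - (1 / (?n - 1))) y * qp (Ric g) g y a b c d
      + (\<lambda>y. 0) y * kn g g y a b c d)"
    by (simp add: fun_eq_iff projective_def dimr_def qp_def)
  have L: "cov4 g (projective g) x i a b c d = cov4 g (Riem g) x i a b c d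
      + pd i (\<lambda>y. - (1 / (?n - 1))) x * qp (Ric g) g x a b c d
      + (- (1 / (?n - 1))) * cov4 g (qp (Ric g) g) x i a b c d
      + pd i (\<lambda>y. 0) x * kn g g x a b c d
      + 0 * cov4 g (kn g g) x i a b c d"
    unfolding T by (rule cov4_lin[OF dR dQP dKG differentiable_const differentiable_const])
  have GG: "kn g g x a b c d = 2 * qp g g x a b c d"
    by (simp add: kn_def qp_def algebra_simps)
  have PR: "projective g x a b c d = Riem g x a b c d - 1 / (?n - 1) * qp (Ric g) g x a b c d"
    by (simp add: projective_def dimr_def qp_def)
  show ?thesis
    unfolding L R_eq QP_eq KG_eq pd_const PR PP[symmetric]
    by (rule alg_proj[OF n1 GG])
qed

end

theorem theorem3p8:
  fixes U :: "(real^'n::finite) set"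
    and g :: "'n tens2"
    and Pb Fb Pi1 Phi1 Psi1 Theta1 :: "'n form1"
  assumes "CARD('n) \<ge> 3"
    and "semi_riemannian U g"
    and "ricci_gen_recurrent U g Pb Fb"
    and "SGK U g (Riem g) Pi1 Phi1 Psi1 Theta1"
  shows "SGK U g (conformal g) Pi1 Phi1
           (\<lambda>x i. Psi1 x i - (Pb x i - Pi1 x i) / (real CARD('n) - 2))
           (\<lambda>x i. Theta1 x i - Fb x i / (real CARD('n) - 2)
              + (scal g x * Pb x i + real CARD('n) * Fb x i - scal g x * Pi1 x i)
                / (2 * (real CARD('n) - 1) * (real CARD('n) - 2)))
    \<and> SGK U g (concircular g) Pi1 Phi1 Psi1
           (\<lambda>x i. Theta1 x i
              - (scal g x * Pb x i + real CARD('n) * Fb x i - scal g x * Pi1 x i)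
                / (2 * real CARD('n) * (real CARD('n) - 1)))
    \<and> SGK U g (conharmonic g) Pi1 Phi1
           (\<lambda>x i. Psi1 x i - (Pb x i - Pi1 x i) / (real CARD('n) - 2))
           (\<lambda>x i. Theta1 x i - Fb x i / (real CARD('n) - 2))
    \<and> ((\<forall>x\<in>U. \<forall>i. Pi1 x i = Pb x i) \<longrightarrow>
         SGK U g (projective g) Pi1 Phi1 Psi1
           (\<lambda>x i. Theta1 x i - Fb x i / (2 * (real CARD('n) - 1))))"
proof (intro conjI impI)
  show "SGK U g (conformal g) Pi1 Phi1
           (\<lambda>x i. Psi1 x i - (Pb x i - Pi1 x i) / (real CARD('n) - 2))
           (\<lambda>x i. Theta1 x i - Fb x i / (real CARD('n) - 2)
              + (scal g x * Pb x i + real CARD('n) * Fb x i - scal g x * Pi1 x i)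
                / (2 * (real CARD('n) - 1) * (real CARD('n) - 2)))"
    unfolding SGK_def
  proof (intro ballI allI)
    fix x i a b c d assume x: "x \<in> U"
    show "cov4 g (conformal g) x i a b c d = Pi1 x i * conformal g x a b c d
       + Phi1 x i * kn (Ric g) (Ric g) x a b c d
       + (\<lambda>x i. Psi1 x i - (Pb x i - Pi1 x i) / (real CARD('n) - 2)) x i * kn g (Ric g) x a b c d
       + (\<lambda>x i. Theta1 x i - Fb x i / (real CARD('n) - 2)
              + (scal g x * Pb x i + real CARD('n) * Fb x i - scal g x * Pi1 x i)
                / (2 * (real CARD('n) - 1) * (real CARD('n) - 2))) x i * kn g g x a b c d"
      using conf_pt[OF assms(2) x assms(3,4,1)] by simp
  qed
  show "SGK U g (concircular g) Pi1 Phi1 Psi1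
           (\<lambda>x i. Theta1 x i
              - (scal g x * Pb x i + real CARD('n) * Fb x i - scal g x * Pi1 x i)
                / (2 * real CARD('n) * (real CARD('n) - 1)))"
    unfolding SGK_def
  proof (intro ballI allI)
    fix x i a b c d assume x: "x \<in> U"
    show "cov4 g (concircular g) x i a b c d = Pi1 x i * concircular g x a b c d
       + Phi1 x i * kn (Ric g) (Ric g) x a b c d
       + Psi1 x i * kn g (Ric g) x a b c d
       + (\<lambda>x i. Theta1 x i
              - (scal g x * Pb x i + real CARD('n) * Fb x i - scal g x * Pi1 x i)
                / (2 * real CARD('n) * (real CARD('n) - 1))) x i * kn g g x a b c d"
      using conc_pt[OF assms(2) x assms(3,4,1)] by simp
  qed
  show "SGK U g (conharmonic g) Pi1 Phi1
           (\<lambda>x i. Psi1 x i - (Pb x i - Pi1 x i) / (real CARD('n) - 2))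
           (\<lambda>x i. Theta1 x i - Fb x i / (real CARD('n) - 2))"
    unfolding SGK_def
  proof (intro ballI allI)
    fix x i a b c d assume x: "x \<in> U"
    show "cov4 g (conharmonic g) x i a b c d = Pi1 x i * conharmonic g x a b c d
       + Phi1 x i * kn (Ric g) (Ric g) x a b c d
       + (\<lambda>x i. Psi1 x i - (Pb x i - Pi1 x i) / (real CARD('n) - 2)) x i * kn g (Ric g) x a b c d
       + (\<lambda>x i. Theta1 x i - Fb x i / (real CARD('n) - 2)) x i * kn g g x a b c d"
      using conh_pt[OF assms(2) x assms(3,4,1)] by simp
  qed
  assume PP: "\<forall>x\<in>U. \<forall>i. Pi1 x i = Pb x i"
  show "SGK U g (projective g) Pi1 Phi1 Psi1
           (\<lambda>x i. Theta1 x i - Fb x i / (2 * (real CARD('n) - 1)))"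
    unfolding SGK_def
  proof (intro ballI allI)
    fix x i a b c d assume x: "x \<in> U"
    have pp: "Pi1 x i = Pb x i" using PP x by blast
    show "cov4 g (projective g) x i a b c d = Pi1 x i * projective g x a b c d
       + Phi1 x i * kn (Ric g) (Ric g) x a b c d
       + Psi1 x i * kn g (Ric g) x a b c d
       + (\<lambda>x i. Theta1 x i - Fb x i / (2 * (real CARD('n) - 1))) x i * kn g g x a b c d"
      using proj_pt[OF assms(2) x assms(3,4,1) pp] by simp
  qed
qed

end
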